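(* Let $\pi,\hat\pi\in\mathcal S_n$, $\eta,\hat\eta\in\mathcal S_d$, $M\in\mathbb{C}_{\mathrm{Biso}}(\pi,\eta)$, and $p,h\in\mathbb{R}$ with $h\ge 0$. Then \[ \mathcal L_{p,2h}(\hat\pi,\hat\eta)\leq 2\big(\mathcal R_{p-h,h}(\hat\pi)+\mathcal C_{p+h,h}(\hat\eta)\big)\wedge 2\big(\mathcal C_{p-h,h}(\hat\eta)+\mathcal R_{p+h,h}(\hat\pi)\big), \] and \[ \mathcal L_{p,h}(\hat\pi,\hat\eta)\geq \mathcal R_{p,h}(\hat\pi)\vee\mathcal C_{p,h}(\hat\eta). \]
   Context: A matrix is bi-isotonic if it is non-increasing along each row and each column. $\mathbb{C}_{\mathrm{Biso}}(\pi,\eta)$ is the set of $M\in[0,1]^{n\times d}$ such that $(M_{\pi^{-1}(i)\eta^{-1}(j)})_{ij}$ is bi-isotonic. $\mathcal{L}_{p,h}(\hat\pi,\hat\eta)=|\{(i,j): M_{\pi^{-1}(i)\eta^{-1}(j)}\leq p-h,\ M_{\hat\pi^{-1}(i)\hat\eta^{-1}(j)}\geq p+h\}|+|\{(i,j): M_{\pi^{-1}(i)\eta^{-1}(j)}\geq p+h,\ M_{\hat\pi^{-1}(i)\hat\eta^{-1}(j)}\leq p-h\}|$ (with $(i,j)$ ranging over $[n]\times[d]$). $\mathcal R_{p,h}(\hat\pi)=|\{(i,j): M_{\pi^{-1}(i)j}\leq p-h,\ M_{\hat\pi^{-1}(i)j}\geq p+h\}|+|\{(i,j): M_{\pi^{-1}(i)j}\geq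 p+h,\ M_{\hat\pi^{-1}(i)j}\leq p-h\}|$. $\mathcal C_{p,h}(\hat\eta)=|\{(i,j): M_{i\eta^{-1}(j)}\leq p-h,\ M_{i\hat\eta^{-1}(j)}\geq p+h\}|+|\{(i,j): M_{i\eta^{-1}(j)}\geq p+h,\ M_{i\hat\eta^{-1}(j)}\leq p-h\}|$. *)

theory Defs
  imports Complex_Main "HOL-Combinatorics.Permutations"
begin

text \<open>Matrices in [0,1]^{n x d} are functions nat => nat => real, indices 0..<n and 0..<d.
  Permutations of [n] are bijections permuting {..<n}; pi^{-1} is inv pi.\<close>

definition bi_isotonic :: "nat \<Rightarrow> nat \<Rightarrow> (nat \<Rightarrow> nat \<Rightarrow> real) \<Rightarrow> bool" where
  "bi_isotonic n d A \<longleftrightarrow>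
     (\<forall>i i' j. i \<le> i' \<and> i' < n \<and> j < d \<longrightarrow> A i' j \<le> A i j) \<and>
     (\<forall>i j j'. i < n \<and> j \<le> j' \<and> j' < d \<longrightarrow> A i j' \<le> A i j)"

definition CBiso :: "nat \<Rightarrow> nat \<Rightarrow> (nat \<Rightarrow> nat) \<Rightarrow> (nat \<Rightarrow> nat) \<Rightarrow> (nat \<Rightarrow> nat \<Rightarrow> real) set" where
  "CBiso n d \<pi> \<eta> = {M. (\<forall>i<n. \<forall>j<d. 0 \<le> M i j \<and> M i j \<le> 1) \<and>
                         bi_isotonic n d (\<lambda>i j. M (inv \<pi> i) (inv \<eta> j))}"

definition Lloss :: "nat \<Rightarrow> nat \<Rightarrow> (nat \<Rightarrow> nat \<Rightarrow> real) \<Rightarrow> (nat \<Rightarrow> nat) \<Rightarrow> (nat \<Rightarrow> nat)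
    \<Rightarrow> real \<Rightarrow> real \<Rightarrow> (nat \<Rightarrow> nat) \<Rightarrow> (nat \<Rightarrow> nat) \<Rightarrow> nat" where
  "Lloss n d M \<pi> \<eta> p h \<pi>h \<eta>h =
     card {(i,j) \<in> {..<n} \<times> {..<d}. M (inv \<pi> i) (inv \<eta> j) \<le> p - h \<and> M (inv \<pi>h i) (inv \<eta>h j) \<ge> p + h}
   + card {(i,j) \<in> {..<n} \<times> {..<d}. M (inv \<pi> i) (inv \<eta> j) \<ge> p + h \<and> M (inv \<pi>h i) (inv \<eta>h j) \<le> p - h}"

definition Rloss :: "nat \<Rightarrow> nat \<Rightarrow> (nat \<Rightarrow> nat \<Rightarrow> real) \<Rightarrow> (nat \<Rightarrow> nat)
    \<Rightarrow> real \<Rightarrow> real \<Rightarrow> (nat \<Rightarrow> nat) \<Rightarrow> nat" where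
  "Rloss n d M \<pi> p h \<pi>h =
     card {(i,j) \<in> {..<n} \<times> {..<d}. M (inv \<pi> i) j \<le> p - h \<and> M (inv \<pi>h i) j \<ge> p + h}
   + card {(i,j) \<in> {..<n} \<times> {..<d}. M (inv \<pi> i) j \<ge> p + h \<and> M (inv \<pi>h i) j \<le> p - h}"

definition Closs :: "nat \<Rightarrow> nat \<Rightarrow> (nat \<Rightarrow> nat \<Rightarrow> real) \<Rightarrow> (nat \<Rightarrow> nat)
    \<Rightarrow> real \<Rightarrow> real \<Rightarrow> (nat \<Rightarrow> nat) \<Rightarrow> nat" where
  "Closs n d M \<eta> p h \<eta>h =
     card {(i,j) \<in> {..<n} \<times> {..<d}. M i (inv \<eta> j) \<le> p - h \<and> M i (inv \<eta>h j) \<ge> p + h}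
   + card {(i,j) \<in> {..<n} \<times> {..<d}. M i (inv \<eta> j) \<ge> p + h \<and> M i (inv \<eta>h j) \<le> p - h}"

end

theory Submission
  imports Defs
begin

definition cs :: "nat \<Rightarrow> nat \<Rightarrow> (nat \<Rightarrow> nat \<Rightarrow> real) \<Rightarrow> (nat \<Rightarrow> nat \<Rightarrow> real) \<Rightarrow> real \<Rightarrow> real \<Rightarrow> nat" where
  "cs n d F G a b = card {(i,j) \<in> {..<n} \<times> {..<d}. F i j \<le> a \<and> G i j \<ge> b}"

lemma Lloss_cs: "Lloss n d M \<pi> \<eta> p h \<pi>h \<eta>h =
  cs n d (\<lambda>i j. M (inv \<pi> i) (inv \<eta> j)) (\<lambda>i j. M (inv \<pi>h i) (inv \<eta>h j)) (p-h) (p+h)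
+ cs n d (\<lambda>i j. M (inv \<pi>h i) (inv \<eta>h j)) (\<lambda>i j. M (inv \<pi> i) (inv \<eta> j)) (p-h) (p+h)"
  unfolding Lloss_def cs_def
  by (intro arg_cong2[where f="(+)"] arg_cong[where f=card]) auto

lemma Rloss_cs: "Rloss n d M \<pi> p h \<pi>h =
  cs n d (\<lambda>i j. M (inv \<pi> i) j) (\<lambda>i j. M (inv \<pi>h i) j) (p-h) (p+h)
+ cs n d (\<lambda>i j. M (inv \<pi>h i) j) (\<lambda>i j. M (inv \<pi> i) j) (p-h) (p+h)"
  unfolding Rloss_def cs_def
  by (intro arg_cong2[where f="(+)"] arg_cong[where f=card]) auto

lemma Closs_cs: "Closs n d M \<eta> p h \<eta>h =
  cs n d (\<lambda>i j. M i (inv \<eta> j)) (\<lambda>i j. M i (inv \<eta>h j)) (p-h) (p+h)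
+ cs n d (\<lambda>i j. M i (inv \<eta>h j)) (\<lambda>i j. M i (inv \<eta> j)) (p-h) (p+h)"
  unfolding Closs_def cs_def
  by (intro arg_cong2[where f="(+)"] arg_cong[where f=card]) auto

lemma fin2: "finite {(i,j) \<in> {..<n::nat} \<times> {..<d::nat}. P i j}"
  by (rule finite_subset[of _ "{..<n} \<times> {..<d}"]) (auto intro!: finite_cartesian_product)

lemma cs_triangle: "cs n d F H a b \<le> cs n d F G a m + cs n d G H m b"
proof -
  have "{(i,j) \<in> {..<n} \<times> {..<d}. F i j \<le> a \<and> H i j \<ge> b} \<subseteq>
        {(i,j) \<in> {..<n} \<times> {..<d}. F i j \<le> a \<and> G i j \<ge> m} \<union>
        {(i,j) \<in> {..<n} \<times> {..<d}. G i j \<le> m \<and> H i j \<ge> b}" by auto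
  then have "card {(i,j) \<in> {..<n} \<times> {..<d}. F i j \<le> a \<and> H i j \<ge> b} \<le>
        card ({(i,j) \<in> {..<n} \<times> {..<d}. F i j \<le> a \<and> G i j \<ge> m} \<union>
        {(i,j) \<in> {..<n} \<times> {..<d}. G i j \<le> m \<and> H i j \<ge> b})"
    by (intro card_mono finite_UnI fin2)
  also have "\<dots> \<le> card {(i,j) \<in> {..<n} \<times> {..<d}. F i j \<le> a \<and> G i j \<ge> m} +
        card {(i,j) \<in> {..<n} \<times> {..<d}. G i j \<le> m \<and> H i j \<ge> b}" by (rule card_Un_le)
  finally show ?thesis unfolding cs_def .
qed


lemma cs_reindex_col:
  assumes "\<sigma> permutes {..<d}"
  shows "cs n d (\<lambda>i j. F i (\<sigma> j)) (\<lambda>i j. G i (\<sigma> j)) a b = cs n d F G a b"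
proof -
  let ?f = "\<lambda>(i,j). (i, \<sigma> j)"
  let ?L = "{(i,j) \<in> {..<n} \<times> {..<d}. F i (\<sigma> j) \<le> a \<and> G i (\<sigma> j) \<ge> b}"
  let ?R = "{(i,j) \<in> {..<n} \<times> {..<d}. F i j \<le> a \<and> G i j \<ge> b}"
  have inj: "inj \<sigma>" using permutes_inj[OF assms] .
  have im: "\<And>j. j < d \<Longrightarrow> \<sigma> j < d" using permutes_in_image[OF assms] by simp
  have im2: "\<And>j. j < d \<Longrightarrow> inv \<sigma> j < d" using permutes_in_image[OF permutes_inv[OF assms]] by simp
  have si: "\<And>j. \<sigma> (inv \<sigma> j) = j" using permutes_inverses(1)[OF assms] by simp
  have "?f ` ?L = ?R"
  proof
    show "?f ` ?L \<subseteq> ?R" using im by force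
    show "?R \<subseteq> ?f ` ?L"
    proof
      fix x assume "x \<in> ?R"
      then obtain i j where x: "x = (i,j)" "i < n" "j < d" "F i j \<le> a" "G i j \<ge> b" by auto
      show "x \<in> ?f ` ?L" using x si[of j] im2[of j] by (intro image_eqI[where x="(i, inv \<sigma> j)"]) auto
    qed
  qed
  moreover have "inj_on ?f ?L" using inj unfolding inj_on_def by auto
  ultimately have "card ?R = card ?L" using card_image[of ?f ?L] by simp
  then show ?thesis unfolding cs_def by (rule sym)
qed

lemma cs_reindex_row:
  assumes "\<sigma> permutes {..<n}"
  shows "cs n d (\<lambda>i j. F (\<sigma> i) j) (\<lambda>i j. G (\<sigma> i) j) a b = cs n d F G a b"
proof -
  let ?f = "\<lambda>(i,j). (\<sigma> i, j)"
  let ?L = "{(i,j) \<in> {..<n} \<times> {..<d}. F (\<sigma> i) j \<le> a \<and> G (\<sigma> i) j \<ge> b}"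
  let ?R = "{(i,j) \<in> {..<n} \<times> {..<d}. F i j \<le> a \<and> G i j \<ge> b}"
  have inj: "inj \<sigma>" using permutes_inj[OF assms] .
  have im: "\<And>j. j < n \<Longrightarrow> \<sigma> j < n" using permutes_in_image[OF assms] by simp
  have im2: "\<And>j. j < n \<Longrightarrow> inv \<sigma> j < n" using permutes_in_image[OF permutes_inv[OF assms]] by simp
  have si: "\<And>j. \<sigma> (inv \<sigma> j) = j" using permutes_inverses(1)[OF assms] by simp
  have "?f ` ?L = ?R"
  proof
    show "?f ` ?L \<subseteq> ?R" using im by force
    show "?R \<subseteq> ?f ` ?L"
    proof
      fix x assume "x \<in> ?R"
      then obtain i j where x: "x = (i,j)" "i < n" "j < d" "F i j \<le> a" "G i j \<ge> b" by auto
      show "x \<in> ?f ` ?L" using x si[of i] im2[of i] by (intro image_eqI[where x="(inv \<sigma> i, j)"]) auto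
    qed
  qed
  moreover have "inj_on ?f ?L" using inj unfolding inj_on_def by auto
  ultimately have "card ?R = card ?L" using card_image[of ?f ?L] by simp
  then show ?thesis unfolding cs_def by (rule sym)
qed

lemma line_core:
  assumes "finite U" "X \<subseteq> U" "Y \<subseteq> U" "Z \<subseteq> U" "card Z = card Y"
    "X \<inter> Y \<noteq> {} \<Longrightarrow> X \<union> Y = U"
  shows "card (X \<inter> Y) \<le> card (X \<inter> Z)"
proof (cases "X \<inter> Y = {}")
  case True then show ?thesis by simp
next
  case False
  have f: "finite X" "finite Y" "finite Z" using assms(1-4) finite_subset by metis+
  have 1: "card X + card Y = card (X \<union> Y) + card (X \<inter> Y)" using card_Un_Int f by blast
  have 2: "card X + card Z = card (X \<union> Z) + card (X \<inter> Z)" using card_Un_Int f by blast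
  have 3: "card (X \<union> Z) \<le> card U" using assms(1,2,4) by (intro card_mono) auto
  have 4: "X \<union> Y = U" using assms(6) False by blast
  have 5: "card X + card Y = card U + card (X \<inter> Y)" using 1 4 by simp
  show ?thesis using 5 2 3 assms(5) by linarith
qed

lemma card_perm:
  assumes "\<sigma> permutes {..<d}"
  shows "card {j\<in>{..<d::nat}. P (\<sigma> j)} = card {j\<in>{..<d}. P j}"
proof -
  have im: "\<And>j. j < d \<Longrightarrow> \<sigma> j < d" using permutes_in_image[OF assms] by simp
  have im2: "\<And>j. j < d \<Longrightarrow> inv \<sigma> j < d" using permutes_in_image[OF permutes_inv[OF assms]] by simp
  have si: "\<And>j. \<sigma> (inv \<sigma> j) = j" using permutes_inverses(1)[OF assms] by simp
  have "\<sigma> ` {j\<in>{..<d}. P (\<sigma> j)} = {j\<in>{..<d}. P j}"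
  proof
    show "\<sigma> ` {j\<in>{..<d}. P (\<sigma> j)} \<subseteq> {j\<in>{..<d}. P j}" using im by force
    show "{j\<in>{..<d}. P j} \<subseteq> \<sigma> ` {j\<in>{..<d}. P (\<sigma> j)}"
    proof
      fix j assume "j \<in> {j\<in>{..<d}. P j}"
      then show "j \<in> \<sigma> ` {j\<in>{..<d}. P (\<sigma> j)}" using si[of j] im2[of j]
        by (intro image_eqI[where x="inv \<sigma> j"]) auto
    qed
  qed
  moreover have "inj_on \<sigma> {j\<in>{..<d}. P (\<sigma> j)}" using permutes_inj[OF assms] unfolding inj_on_def by auto
  ultimately show ?thesis using card_image[of \<sigma> "{j\<in>{..<d}. P (\<sigma> j)}"] by simp
qed

lemma line1:
  assumes "\<sigma> permutes {..<d}"
    and a: "\<And>j j'. j \<le> j' \<Longrightarrow> j' < d \<Longrightarrow> a j' \<le> (a j::real)"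
    and b: "\<And>j j'. j \<le> j' \<Longrightarrow> j' < d \<Longrightarrow> b j' \<le> (b j::real)"
  shows "card {j\<in>{..<d::nat}. a j \<le> s \<and> b j \<ge> t} \<le> card {j\<in>{..<d}. a j \<le> s \<and> b (\<sigma> j) \<ge> t}"
proof -
  let ?X = "{j\<in>{..<d}. a j \<le> s}"
  let ?Y = "{j\<in>{..<d}. b j \<ge> t}"
  let ?Z = "{j\<in>{..<d}. b (\<sigma> j) \<ge> t}"
  have "card (?X \<inter> ?Y) \<le> card (?X \<inter> ?Z)"
  proof (rule line_core[of "{..<d}"])
    show "card ?Z = card ?Y" by (rule card_perm[OF assms(1)])
    show "?X \<union> ?Y = {..<d}" if "?X \<inter> ?Y \<noteq> {}"
    proof -
      from that obtain k where k: "k < d" "a k \<le> s" "b k \<ge> t" by auto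
      have "j \<in> ?X \<union> ?Y" if j: "j < d" for j
      proof (cases "j \<le> k")
        case True then have "b k \<le> b j" using b k(1) by blast
        then show ?thesis using j k by auto
      next
        case False then have "a j \<le> a k" using a j by simp
        then show ?thesis using j k by auto
      qed
      then show ?thesis by auto
    qed
  qed auto
  moreover have "?X \<inter> ?Y = {j\<in>{..<d}. a j \<le> s \<and> b j \<ge> t}" by auto
  moreover have "?X \<inter> ?Z = {j\<in>{..<d}. a j \<le> s \<and> b (\<sigma> j) \<ge> t}" by auto
  ultimately show ?thesis by simp
qed

lemma line2:
  assumes "\<sigma> permutes {..<d}"
    and a: "\<And>j j'. j \<le> j' \<Longrightarrow> j' < d \<Longrightarrow> a j' \<le> (a j::real)"
    and b: "\<And>j j'. j \<le> j' \<Longrightarrow> j' < d \<Longrightarrow> b j' \<le> (b j::real)"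
  shows "card {j\<in>{..<d::nat}. b j \<le> s \<and> a j \<ge> t} \<le> card {j\<in>{..<d}. b (\<sigma> j) \<le> s \<and> a j \<ge> t}"
proof -
  let ?X = "{j\<in>{..<d}. a j \<ge> t}"
  let ?Y = "{j\<in>{..<d}. b j \<le> s}"
  let ?Z = "{j\<in>{..<d}. b (\<sigma> j) \<le> s}"
  have "card (?X \<inter> ?Y) \<le> card (?X \<inter> ?Z)"
  proof (rule line_core[of "{..<d}"])
    show "card ?Z = card ?Y" by (rule card_perm[OF assms(1)])
    show "?X \<union> ?Y = {..<d}" if "?X \<inter> ?Y \<noteq> {}"
    proof -
      from that obtain k where k: "k < d" "a k \<ge> t" "b k \<le> s" by auto
      have "j \<in> ?X \<union> ?Y" if j: "j < d" for j
      proof (cases "j \<le> k")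
        case True then have "a k \<le> a j" using a k(1) by blast
        then show ?thesis using j k by auto
      next
        case False then have "b j \<le> b k" using b j by simp
        then show ?thesis using j k by auto
      qed
      then show ?thesis by auto
    qed
  qed auto
  moreover have "?X \<inter> ?Y = {j\<in>{..<d}. b j \<le> s \<and> a j \<ge> t}" by auto
  moreover have "?X \<inter> ?Z = {j\<in>{..<d}. b (\<sigma> j) \<le> s \<and> a j \<ge> t}" by auto
  ultimately show ?thesis by simp
qed

lemma cs_rows: "cs n d F G a b = (\<Sum>i<n. card {j\<in>{..<d}. F i j \<le> a \<and> G i j \<ge> b})"
proof -
  have "{(i,j)\<in>{..<n}\<times>{..<d}. F i j \<le> a \<and> G i j \<ge> b} = Sigma {..<n} (\<lambda>i. {j\<in>{..<d}. F i j \<le> a \<and> G i j \<ge> b})" by auto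
  then show ?thesis unfolding cs_def by (simp add: card_SigmaI)
qed

lemma cs_cols: "cs n d F G a b = (\<Sum>j<d. card {i\<in>{..<n}. F i j \<le> a \<and> G i j \<ge> b})"
proof -
  have "{(i,j)\<in>{..<n}\<times>{..<d}. F i j \<le> a \<and> G i j \<ge> b} = (\<lambda>(j,i). (i,j)) ` Sigma {..<d} (\<lambda>j. {i\<in>{..<n}. F i j \<le> a \<and> G i j \<ge> b})" by auto
  moreover have "inj_on (\<lambda>(j,i). (i,j)) (Sigma {..<d} (\<lambda>j. {i\<in>{..<n}. F i j \<le> a \<and> G i j \<ge> b}))"
    unfolding inj_on_def by auto
  ultimately show ?thesis unfolding cs_def by (simp add: card_image card_SigmaI)
qed

lemma rows_mono:
  assumes "\<sigma> permutes {..<d}"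
    and F: "\<And>i j j'. i < n \<Longrightarrow> j \<le> j' \<Longrightarrow> j' < d \<Longrightarrow> F i j' \<le> F i j"
    and G: "\<And>i j j'. i < n \<Longrightarrow> j \<le> j' \<Longrightarrow> j' < d \<Longrightarrow> G i j' \<le> G i j"
    and H: "\<And>i j. H i j = G i (\<sigma> j)"
  shows "cs n d F G x y \<le> cs n d F H x y" "cs n d G F x y \<le> cs n d H F x y"
proof -
  show "cs n d F G x y \<le> cs n d F H x y" unfolding cs_rows H
    by (intro sum_mono line1[OF assms(1)]) (auto intro: F G)
  show "cs n d G F x y \<le> cs n d H F x y" unfolding cs_rows H
    by (intro sum_mono line2[OF assms(1)]) (auto intro: F G)
qed

lemma cols_mono:
  assumes "\<sigma> permutes {..<n}"
    and F: "\<And>i i' j. j < d \<Longrightarrow> i \<le> i' \<Longrightarrow> i' < n \<Longrightarrow> F i' j \<le> F i j"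
    and G: "\<And>i i' j. j < d \<Longrightarrow> i \<le> i' \<Longrightarrow> i' < n \<Longrightarrow> G i' j \<le> G i j"
    and H: "\<And>i j. H i j = G (\<sigma> i) j"
  shows "cs n d F G x y \<le> cs n d F H x y" "cs n d G F x y \<le> cs n d H F x y"
proof -
  show "cs n d F G x y \<le> cs n d F H x y" unfolding cs_cols H
    by (intro sum_mono line1[OF assms(1)]) (auto intro: F G)
  show "cs n d G F x y \<le> cs n d H F x y" unfolding cs_cols H
    by (intro sum_mono line2[OF assms(1)]) (auto intro: F G)
qed

theorem lemmaA1:
  fixes n d :: nat and \<pi> \<pi>h \<eta> \<eta>h :: "nat \<Rightarrow> nat"
    and M :: "nat \<Rightarrow> nat \<Rightarrow> real" and p h :: real
  assumes "\<pi> permutes {..<n}" and "\<pi>h permutes {..<n}"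
    and "\<eta> permutes {..<d}" and "\<eta>h permutes {..<d}"
    and "M \<in> CBiso n d \<pi> \<eta>"
    and "h \<ge> 0"
  shows "Lloss n d M \<pi> \<eta> p (2*h) \<pi>h \<eta>h
           \<le> min (2 * (Rloss n d M \<pi> (p - h) h \<pi>h + Closs n d M \<eta> (p + h) h \<eta>h))
                 (2 * (Closs n d M \<eta> (p - h) h \<eta>h + Rloss n d M \<pi> (p + h) h \<pi>h))
         \<and> Lloss n d M \<pi> \<eta> p h \<pi>h \<eta>h
           \<ge> max (Rloss n d M \<pi> p h \<pi>h) (Closs n d M \<eta> p h \<eta>h)"
proof -
  note P = assms(1-4)
  have iP: "inv \<pi> permutes {..<n}" "inv \<pi>h permutes {..<n}" "inv \<eta> permutes {..<d}" "inv \<eta>h permutes {..<d}"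
    using P by (auto intro: permutes_inv)
  let ?A = "\<lambda>i j. M (inv \<pi> i) (inv \<eta> j)"
  let ?c = "\<lambda>i j. M (inv \<pi>h i) (inv \<eta>h j)"
  let ?D = "\<lambda>i j. M (inv \<pi>h i) (inv \<eta> j)"
  let ?E = "\<lambda>i j. M (inv \<pi> i) (inv \<eta>h j)"
  let ?R1 = "\<lambda>i j. M (inv \<pi> i) j"
  let ?R2 = "\<lambda>i j. M (inv \<pi>h i) j"
  let ?C1 = "\<lambda>i j. M i (inv \<eta> j)"
  let ?C2 = "\<lambda>i j. M i (inv \<eta>h j)"
  have RA1: "\<And>x y. cs n d ?A ?D x y = cs n d ?R1 ?R2 x y" using cs_reindex_col[OF iP(3), of n ?R1 ?R2] by simp
  have RA2: "\<And>x y. cs n d ?D ?A x y = cs n d ?R2 ?R1 x y" using cs_reindex_col[OF iP(3), of n ?R2 ?R1] by simp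
  have RE1: "\<And>x y. cs n d ?E ?c x y = cs n d ?R1 ?R2 x y" using cs_reindex_col[OF iP(4), of n ?R1 ?R2] by simp
  have RE2: "\<And>x y. cs n d ?c ?E x y = cs n d ?R2 ?R1 x y" using cs_reindex_col[OF iP(4), of n ?R2 ?R1] by simp
  have CD1: "\<And>x y. cs n d ?D ?c x y = cs n d ?C1 ?C2 x y" using cs_reindex_row[OF iP(2), of d ?C1 ?C2] by simp
  have CD2: "\<And>x y. cs n d ?c ?D x y = cs n d ?C2 ?C1 x y" using cs_reindex_row[OF iP(2), of d ?C2 ?C1] by simp
  have CA1: "\<And>x y. cs n d ?A ?E x y = cs n d ?C1 ?C2 x y" using cs_reindex_row[OF iP(1), of d ?C1 ?C2] by simp
  have CA2: "\<And>x y. cs n d ?E ?A x y = cs n d ?C2 ?C1 x y" using cs_reindex_row[OF iP(1), of d ?C2 ?C1] by simp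
  have Rl: "\<And>q. Rloss n d M \<pi> q h \<pi>h = cs n d ?R1 ?R2 (q-h) (q+h) + cs n d ?R2 ?R1 (q-h) (q+h)"
    by (rule Rloss_cs)
  have Cl: "\<And>q. Closs n d M \<eta> q h \<eta>h = cs n d ?C1 ?C2 (q-h) (q+h) + cs n d ?C2 ?C1 (q-h) (q+h)"
    by (rule Closs_cs)
  have Ll: "\<And>k. Lloss n d M \<pi> \<eta> p k \<pi>h \<eta>h = cs n d ?A ?c (p-k) (p+k) + cs n d ?c ?A (p-k) (p+k)"
    by (rule Lloss_cs)
  have ar: "p - h - h = p - 2*h" "p - h + h = p" "p + h - h = p" "p + h + h = p + 2*h" by auto
  have u1: "Lloss n d M \<pi> \<eta> p (2*h) \<pi>h \<eta>h \<le> Rloss n d M \<pi> (p - h) h \<pi>h + Closs n d M \<eta> (p + h) h \<eta>h"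
  proof -
    have "cs n d ?A ?c (p-2*h) (p+2*h) \<le> cs n d ?A ?D (p-2*h) p + cs n d ?D ?c p (p+2*h)" by (rule cs_triangle)
    moreover have "cs n d ?c ?A (p-2*h) (p+2*h) \<le> cs n d ?c ?E (p-2*h) p + cs n d ?E ?A p (p+2*h)" by (rule cs_triangle)
    ultimately show ?thesis unfolding Ll Rl Cl ar RA1 CD1 RE2 CA2 by linarith
  qed
  have u2: "Lloss n d M \<pi> \<eta> p (2*h) \<pi>h \<eta>h \<le> Closs n d M \<eta> (p - h) h \<eta>h + Rloss n d M \<pi> (p + h) h \<pi>h"
  proof -
    have "cs n d ?A ?c (p-2*h) (p+2*h) \<le> cs n d ?A ?E (p-2*h) p + cs n d ?E ?c p (p+2*h)" by (rule cs_triangle)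
    moreover have "cs n d ?c ?A (p-2*h) (p+2*h) \<le> cs n d ?c ?D (p-2*h) p + cs n d ?D ?A p (p+2*h)" by (rule cs_triangle)
    ultimately show ?thesis unfolding Ll Rl Cl ar CA1 RE1 CD2 RA2 by linarith
  qed
  have bi: "bi_isotonic n d ?A" using assms(5) unfolding CBiso_def by simp
  have Arow: "\<And>i j j'. i < n \<Longrightarrow> j \<le> j' \<Longrightarrow> j' < d \<Longrightarrow> ?A i j' \<le> ?A i j"
    using bi unfolding bi_isotonic_def by blast
  have Acol: "\<And>i i' j. j < d \<Longrightarrow> i \<le> i' \<Longrightarrow> i' < n \<Longrightarrow> ?A i' j \<le> ?A i j"
    using bi unfolding bi_isotonic_def by blast
  have ipp: "\<And>x. inv \<pi> (\<pi> x) = x" using permutes_inverses(2)[OF P(1)] by simp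
  have iee: "\<And>x. inv \<eta> (\<eta> x) = x" using permutes_inverses(2)[OF P(3)] by simp
  have Drow: "\<And>i j j'. i < n \<Longrightarrow> j \<le> j' \<Longrightarrow> j' < d \<Longrightarrow> ?D i j' \<le> ?D i j"
  proof -
    fix i j j' assume h: "i < n" "j \<le> j'" "j' < d"
    have "\<pi> (inv \<pi>h i) < n" using h(1) permutes_in_image[OF P(1)] permutes_in_image[OF iP(2)] by simp
    then have "?A (\<pi> (inv \<pi>h i)) j' \<le> ?A (\<pi> (inv \<pi>h i)) j" using Arow h by blast
    then show "?D i j' \<le> ?D i j" by (simp add: ipp)
  qed
  have Ecol: "\<And>i i' j. j < d \<Longrightarrow> i \<le> i' \<Longrightarrow> i' < n \<Longrightarrow> ?E i' j \<le> ?E i j"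
  proof -
    fix i i' j assume h: "j < d" "i \<le> i'" "i' < n"
    have "\<eta> (inv \<eta>h j) < d" using h(1) permutes_in_image[OF P(3)] permutes_in_image[OF iP(4)] by simp
    then have "?A i' (\<eta> (inv \<eta>h j)) \<le> ?A i (\<eta> (inv \<eta>h j))" using Acol h by blast
    then show "?E i' j \<le> ?E i j" by (simp add: iee)
  qed
  have sR: "(\<eta> \<circ> inv \<eta>h) permutes {..<d}" using permutes_compose[OF iP(4) P(3)] .
  have sC: "(\<pi> \<circ> inv \<pi>h) permutes {..<n}" using permutes_compose[OF iP(2) P(1)] .
  have Hc1: "\<And>i j. ?c i j = ?D i ((\<eta> \<circ> inv \<eta>h) j)" by (simp add: iee)
  have Hc2: "\<And>i j. ?c i j = ?E ((\<pi> \<circ> inv \<pi>h) i) j" by (simp add: ipp)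
  have l1: "Rloss n d M \<pi> p h \<pi>h \<le> Lloss n d M \<pi> \<eta> p h \<pi>h \<eta>h"
  proof -
    have "cs n d ?A ?D (p-h) (p+h) \<le> cs n d ?A ?c (p-h) (p+h)"
      by (rule rows_mono(1)[where F="?A" and G="?D" and H="?c", OF sR Arow Drow Hc1])
    moreover have "cs n d ?D ?A (p-h) (p+h) \<le> cs n d ?c ?A (p-h) (p+h)"
      by (rule rows_mono(2)[where F="?A" and G="?D" and H="?c", OF sR Arow Drow Hc1])
    ultimately show ?thesis unfolding Ll Rl RA1 RA2 by linarith
  qed
  have l2: "Closs n d M \<eta> p h \<eta>h \<le> Lloss n d M \<pi> \<eta> p h \<pi>h \<eta>h"
  proof -
    have "cs n d ?A ?E (p-h) (p+h) \<le> cs n d ?A ?c (p-h) (p+h)"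
      by (rule cols_mono(1)[where F="?A" and G="?E" and H="?c", OF sC Acol Ecol Hc2])
    moreover have "cs n d ?E ?A (p-h) (p+h) \<le> cs n d ?c ?A (p-h) (p+h)"
      by (rule cols_mono(2)[where F="?A" and G="?E" and H="?c", OF sC Acol Ecol Hc2])
    ultimately show ?thesis unfolding Ll Cl CA1 CA2 by linarith
  qed
  show ?thesis using u1 u2 l1 l2 by simp
qed

end
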